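(* Let $(\mathcal{S},\mathcal{R})$ be an $r$-complete positive presentation. Then the monoid $\mathrm{Mon}(\mathcal{S};\mathcal{R})$ admits left cancellation (i.e. $xy=xz$ implies $y=z$) if and only if $u^{-1}v\curvearrowright_r\varepsilon$ holds for every relation of $\mathcal{R}$ of the form $su=sv$ with $s\in\mathcal{S}$ and $u,v\in\mathcal{S}^*$. In particular, a sufficient condition for $\mathrm{Mon}(\mathcal{S};\mathcal{R})$ to admit left cancellation is that $\mathcal{R}$ contains no relation $su=sv$ with $s\in\mathcal{S}$ and $u\neq v$.
   Context: A positive presentation is a pair $(\mathcal{S},\mathcal{R})$ where $\mathcal{S}$ is a nonempty set of letters and $\mathcal{R}$ is a family of relations $u=v$, i.e. unordered pairs $\{u,v\}$ of nonempty words in the free monoid $\mathcal{S}^*$. $\varepsilon$ denotes the empty word; $\equiv$ is the smallest congruence on $\mathcal{S}^*$ containing all pairs of $\mathcal{R}$, and $\mathrm{Mon}(\mathcal{S};\mathcal{R})=\mathcal{S}^*/{\equiv}$. Let $\mathcal{S}^{-1}=\{s^{-1}:s\in\mathcal{S}\}$ be a disjoint copy of $\mathcal{S}$; for $u\in\mathcal{S}^*$, $u^{-1}$ is obtained by reversing the order of the letters of $u$ and replacing each $s$ by $s^{-1}$. Right reversing: for words $\mathbf{w},\mathbf{w}'$ on $\mathcal{S}\cup\mathcal{S}^{-1}$ we write $\mathbf{w}\curvearrowright_r\mathbf{w}'$ if $\mathbf{w}'$ is obtained from $\mathbf{w}$ by a finite (possibly empty) sequence of steps, each of which either deletes a subword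 $u^{-1}u$ with $u\in\mathcal{S}^*$ nonempty, or replaces a subword $u^{-1}v$ with $u,v\in\mathcal{S}^*$ nonempty by a word $v'u'^{-1}$ with $u',v'\in\mathcal{S}^*$ such that $uv'=vu'$ is a relation of $\mathcal{R}$. $(\mathcal{S},\mathcal{R})$ is $r$-complete if for all $u,v,u',v'\in\mathcal{S}^*$ with $uv'\equiv vu'$ there exist $u'',v'',w\in\mathcal{S}^*$ with $u^{-1}v\curvearrowright_r v''u''^{-1}$, $u'\equiv u''w$ and $v'\equiv v''w$. *)

theory Defs
  imports Main
begin

(* The alphabet S is the (nonempty) type 'a; words in S^* are 'a lists.
   A family of relations is a set of pairs R; a pair (u,v) in R stands for
   the unordered relation u = v. *)

definition is_rel :: "('a list \<times> 'a list) set \<Rightarrow> 'a list \<Rightarrow> 'a list \<Rightarrow> bool" where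
  "is_rel R u v \<longleftrightarrow> (u, v) \<in> R \<or> (v, u) \<in> R"

definition positive_presentation :: "('a list \<times> 'a list) set \<Rightarrow> bool" where
  "positive_presentation R \<longleftrightarrow> (\<forall>(u, v) \<in> R. u \<noteq> [] \<and> v \<noteq> [])"

inductive req :: "('a list \<times> 'a list) set \<Rightarrow> 'a list \<Rightarrow> 'a list \<Rightarrow> bool" for R where
  req_rel: "(u, v) \<in> R \<Longrightarrow> req R u v"
| req_refl: "req R w w"
| req_sym: "req R u v \<Longrightarrow> req R v u"
| req_trans: "req R u v \<Longrightarrow> req R v w \<Longrightarrow> req R u w"
| req_cong: "req R u v \<Longrightarrow> req R (x @ u @ y) (x @ v @ y)"

definition left_cancellative :: "('a list \<times> 'a list) set \<Rightarrow> bool" where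
  "left_cancellative R \<longleftrightarrow> (\<forall>x y z. req R (x @ y) (x @ z) \<longrightarrow> req R y z)"

(* signed words: (s, True) is s, (s, False) is s^{-1} *)
definition pos :: "'a list \<Rightarrow> ('a \<times> bool) list" where
  "pos u = map (\<lambda>s. (s, True)) u"

definition neg :: "'a list \<Rightarrow> ('a \<times> bool) list" where
  "neg u = rev (map (\<lambda>s. (s, False)) u)"

inductive rev_step :: "('a list \<times> 'a list) set \<Rightarrow> ('a \<times> bool) list \<Rightarrow> ('a \<times> bool) list \<Rightarrow> bool"
  for R where
  rev_del: "u \<noteq> [] \<Longrightarrow> rev_step R (x @ neg u @ pos u @ y) (x @ y)"
| rev_rep: "u \<noteq> [] \<Longrightarrow> v \<noteq> [] \<Longrightarrow> is_rel R (u @ v') (v @ u') \<Longrightarrow>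
            rev_step R (x @ neg u @ pos v @ y) (x @ pos v' @ neg u' @ y)"

definition rreverses :: "('a list \<times> 'a list) set \<Rightarrow> ('a \<times> bool) list \<Rightarrow> ('a \<times> bool) list \<Rightarrow> bool" where
  "rreverses R = (rev_step R)\<^sup>*\<^sup>*"

definition r_complete :: "('a list \<times> 'a list) set \<Rightarrow> bool" where
  "r_complete R \<longleftrightarrow>
     (\<forall>u v u' v'. req R (u @ v') (v @ u') \<longrightarrow>
        (\<exists>u'' v'' w. rreverses R (neg u @ pos v) (pos v'' @ neg u'')
                     \<and> req R u' (u'' @ w) \<and> req R v' (v'' @ w)))"

end

theory Submission
  imports Defs
begin

lemma req_nil_iff:
  assumes pp: "positive_presentation R"
  shows "req R a b \<Longrightarrow> (a = [] \<longleftrightarrow> b = [])"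
proof (induction rule: req.induct)
  case (req_rel u v)
  then show ?case using pp unfolding positive_presentation_def by auto
qed auto

lemmas req_trans_calc [trans] = req_trans

lemma req_app_right: "req R a b \<Longrightarrow> req R (a @ w) (b @ w)"
  using req_cong[of R a b "[]" w] by simp

lemma req_app_left: "req R a b \<Longrightarrow> req R (w @ a) (w @ b)"
  using req_cong[of R a b w "[]"] by simp

fun relw :: "('a list \<times> 'a list) set \<Rightarrow> ('a \<times> bool) list \<Rightarrow> 'a list \<Rightarrow> 'a list \<Rightarrow> bool" where
  "relw R [] x y = req R x y"
| "relw R ((s, b) # w) x y =
     (if b then relw R w (x @ [s]) y else (\<exists>z. req R x (z @ [s]) \<and> relw R w z y))"

lemma relw_cong: "relw R w x y \<Longrightarrow> req R x x' \<Longrightarrow> relw R w x' y"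
proof (induction w arbitrary: x x')
  case Nil
  then show ?case by (auto intro: req_trans req_sym)
next
  case (Cons p w)
  obtain s b where p: "p = (s, b)" by (cases p)
  show ?case
  proof (cases b)
    case True
    then show ?thesis using Cons p by (auto intro: req_app_right)
  next
    case False
    then show ?thesis using Cons p by simp (meson req_sym req_trans)
  qed
qed

lemma relw_append: "relw R (w1 @ w2) x y \<longleftrightarrow> (\<exists>m. relw R w1 x m \<and> relw R w2 m y)"
proof (induction w1 arbitrary: x)
  case Nil
  then show ?case by (auto intro: relw_cong req_sym req_refl)
next
  case (Cons p w)
  obtain s b where p: "p = (s, b)" by (cases p)
  then show ?case using Cons by auto
qed

lemma relw_pos: "relw R (pos v) x y \<longleftrightarrow> req R (x @ v) y"
  unfolding pos_def by (induction v arbitrary: x) auto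

lemma relw_neg: "relw R (neg u) x y \<longleftrightarrow> req R x (y @ u)"
proof (induction u arbitrary: x rule: rev_induct)
  case Nil
  then show ?case by (simp add: neg_def)
next
  case (snoc s u)
  have "neg (u @ [s]) = (s, False) # neg u" by (simp add: neg_def)
  then have "relw R (neg (u @ [s])) x y \<longleftrightarrow> (\<exists>z. req R x (z @ [s]) \<and> req R z (y @ u))"
    using snoc by simp
  also have "\<dots> \<longleftrightarrow> req R x (y @ u @ [s])"
    by (metis append.assoc req_app_right req_refl req_trans)
  finally show ?case by simp
qed

lemma relw_step: "rev_step R w w' \<Longrightarrow> relw R w x y \<Longrightarrow> relw R w' x y"
proof (induction rule: rev_step.induct)
  case (rev_del u a b)
  then obtain m1 m2 where h: "relw R a x m1" "relw R (neg u @ pos u) m1 m2" "relw R b m2 y"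
    by (auto simp: relw_append)
  from h(2) obtain m where "req R m1 (m @ u)" "req R (m @ u) m2"
    by (auto simp: relw_append relw_pos relw_neg)
  then have "req R m1 m2" by (rule req_trans)
  then have "relw R b m1 y" using h(3) relw_cong req_sym by metis
  then show ?case using h(1) by (auto simp: relw_append)
next
  case (rev_rep u v v' u' a b)
  then obtain m1 m2 where h: "relw R a x m1" "relw R (neg u @ pos v) m1 m2" "relw R b m2 y"
    by (auto simp: relw_append)
  from h(2) obtain m where m: "req R m1 (m @ u)" "req R (m @ v) m2"
    by (auto simp: relw_append relw_pos relw_neg)
  have r: "req R (u @ v') (v @ u')" using rev_rep(3) unfolding is_rel_def
    by (auto intro: req_rel req_sym)
  have "req R (m1 @ v') (m @ u @ v')" using req_app_right[OF m(1)] by simp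
  also have "req R (m @ u @ v') (m @ v @ u')" using req_app_left[OF r] by simp
  also have "req R (m @ v @ u') (m2 @ u')" using req_app_right[OF m(2)] by simp
  finally have "req R (m1 @ v') (m2 @ u')" .
  then have "relw R (pos v' @ neg u') m1 m2"
    by (auto simp: relw_append relw_pos relw_neg intro: req_refl)
  then show ?case using h(1) h(3) by (auto simp: relw_append)
qed

lemma relw_rev: "rreverses R w w' \<Longrightarrow> relw R w x y \<Longrightarrow> relw R w' x y"
  unfolding rreverses_def
  by (induction rule: rtranclp_induct) (auto intro: relw_step)

lemma soundness:
  assumes "rreverses R (neg u @ pos v) (pos a @ neg b)"
  shows "req R (u @ a) (v @ b)"
proof -
  have "relw R (neg u @ pos v) u v"
    by (auto simp: relw_append relw_pos relw_neg intro!: exI[of _ "[]"] req_refl)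
  then have "relw R (pos a @ neg b) u v" using relw_rev assms by metis
  then show ?thesis by (auto simp: relw_append relw_pos relw_neg intro: req_trans)
qed

lemma soundness0:
  assumes "rreverses R (neg u @ pos v) []"
  shows "req R u v"
  using soundness[of R u v "[]" "[]"] assms by (simp add: pos_def neg_def)

lemma rep_no_FT:
  "replicate n True @ replicate m False \<noteq> xs @ [False, True] @ ys"
proof (induction n arbitrary: xs)
  case 0
  show ?case
  proof
    assume "replicate 0 True @ replicate m False = xs @ [False, True] @ ys"
    then have "set (replicate m False) = set (xs @ [False, True] @ ys)" by simp
    moreover have "True \<notin> set (replicate m False)" by simp
    ultimately show False by simp
  qed
next
  case (Suc n)
  show ?case
  proof (cases xs)
    case Nil
    then show ?thesis by simp
  next
    case (Cons x xs')
    then show ?thesis using Suc[of xs'] by auto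
  qed
qed

lemma neg_nonempty_split: "u \<noteq> [] \<Longrightarrow> \<exists>c u0. neg u = neg u0 @ [(c, False)]"
  by (cases u) (auto simp: neg_def)

lemma pos_nonempty_split: "v \<noteq> [] \<Longrightarrow> \<exists>d v0. pos v = (d, True) # pos v0"
  by (cases v) (auto simp: pos_def)

lemma map_snd_posneg: "map snd (pos a @ neg b) = replicate (length a) True @ replicate (length b) False"
  by (simp add: pos_def neg_def rev_map comp_def map_replicate_const)

lemma no_step_posneg: "\<not> rev_step R (pos a @ neg b) t"
proof
  assume "rev_step R (pos a @ neg b) t"
  then obtain x u v y where e: "pos a @ neg b = x @ neg u @ pos v @ y" and "u \<noteq> []" "v \<noteq> []"
    by (cases rule: rev_step.cases) auto
  then obtain c u0 d v0 where "neg u = neg u0 @ [(c, False)]" "pos v = (d, True) # pos v0"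
    using neg_nonempty_split pos_nonempty_split by metis
  with e have "pos a @ neg b = (x @ neg u0) @ [(c, False), (d, True)] @ (pos v0 @ y)" by simp
  then have "map snd (pos a @ neg b) = map snd (x @ neg u0) @ [False, True] @ map snd (pos v0 @ y)"
    by simp
  then show False using rep_no_FT map_snd_posneg by metis
qed

lemma no_step_nil: "\<not> rev_step R [] t"
  using no_step_posneg[of R "[]" "[]"] by (simp add: pos_def neg_def)

lemma length_neg [simp]: "length (neg u) = length u" by (simp add: neg_def)
lemma length_pos [simp]: "length (pos u) = length u" by (simp add: pos_def)

lemma start_split:
  assumes "x @ neg u @ pos v @ y = [(s, False), (s, True)]" "u \<noteq> []" "v \<noteq> []"
  shows "x = [] \<and> y = [] \<and> u = [s] \<and> v = [s]"
proof -
  have l: "length x + length u + length v + length y = 2"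
    using arg_cong[OF assms(1), of length] by simp
  have "length u \<ge> 1" "length v \<ge> 1" using assms(2,3) by (auto simp: Suc_le_eq)
  then have "length x = 0" "length y = 0" "length u = 1" "length v = 1" using l by linarith+
  then have xy: "x = []" "y = []" by simp_all
  from \<open>length u = 1\<close> obtain c where c: "u = [c]" by (cases u) auto
  from \<open>length v = 1\<close> obtain d where d: "v = [d]" by (cases v) auto
  from assms(1) xy c d show ?thesis by (simp add: pos_def neg_def)
qed

lemma start_step:
  assumes "rev_step R [(s, False), (s, True)] t"
  shows "t = [] \<or> (\<exists>a b. t = pos a @ neg b \<and> is_rel R (s # a) (s # b))"
  using assms
proof (cases rule: rev_step.cases)
  case (rev_del u x y)
  then show ?thesis using start_split[of x u u y s] by simp
next
  case (rev_rep u v v' u' x y)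
  then show ?thesis using start_split[of x u v y s] by auto
qed

lemma fst_pos: "map fst (pos a) = a" by (simp add: pos_def comp_def)
lemma fst_neg: "map fst (neg b) = rev b" by (simp add: neg_def rev_map comp_def)

lemma filter_rep: "filter id (replicate n True @ replicate m False) = replicate n True"
  by (induction n) (auto simp: filter_replicate)

lemma posneg_inj: "pos a @ neg b = pos c @ neg d \<Longrightarrow> a = c \<and> b = d"
proof -
  assume e: "pos a @ neg b = pos c @ neg d"
  then have "map snd (pos a @ neg b) = map snd (pos c @ neg d)" by simp
  then have "filter id (replicate (length a) True @ replicate (length b) False)
      = filter id (replicate (length c) True @ replicate (length d) False)"
    by (simp only: map_snd_posneg)
  then have "replicate (length a) True = replicate (length c) True" by (simp only: filter_rep)
  then have "length a = length c" by (metis length_replicate)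
  then have "length (pos a) = length (pos c)" by simp
  with e have "pos a = pos c" "neg b = neg d" by (auto simp: append_eq_append_conv)
  then show ?thesis by (metis fst_pos fst_neg rev_rev_ident)
qed

lemma start_rev:
  assumes "rreverses R [(s, False), (s, True)] t"
  shows "t = [(s, False), (s, True)] \<or> t = [] \<or> (\<exists>a b. t = pos a @ neg b \<and> is_rel R (s # a) (s # b))"
  using assms unfolding rreverses_def
proof (induction rule: rtranclp_induct)
  case base
  then show ?case by simp
next
  case (step y z)
  then show ?case using start_step no_step_nil no_step_posneg by metis
qed

lemma cancel1:
  assumes pp: "positive_presentation R" and rc: "r_complete R"
    and H: "\<forall>s u v. is_rel R (s # u) (s # v) \<longrightarrow> rreverses R (neg u @ pos v) []"
    and e: "req R (s # u) (s # v)"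
  shows "req R u v"
proof -
  have "req R ([s] @ u) ([s] @ v)" using e by simp
  then obtain u'' v'' w where r: "rreverses R (neg [s] @ pos [s]) (pos v'' @ neg u'')"
    and h1: "req R v (u'' @ w)" and h2: "req R u (v'' @ w)"
    using rc unfolding r_complete_def by blast
  have "neg [s] @ pos [s] = [(s, False), (s, True)]" by (simp add: pos_def neg_def)
  with r have "pos v'' @ neg u'' = [(s, False), (s, True)] \<or> pos v'' @ neg u'' = []
     \<or> (\<exists>a b. pos v'' @ neg u'' = pos a @ neg b \<and> is_rel R (s # a) (s # b))"
    using start_rev by metis
  then have "req R v'' u''"
  proof (elim disjE exE conjE)
    assume "pos v'' @ neg u'' = [(s, False), (s, True)]"
    then have False using no_step_posneg[of R v'' u''] rev_step.rev_del[of "[s]" R "[]" "[]"]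
      by (simp add: pos_def neg_def)
    then show ?thesis ..
  next
    assume "pos v'' @ neg u'' = []"
    then show ?thesis by (simp add: pos_def neg_def req_refl)
  next
    fix a b assume "pos v'' @ neg u'' = pos a @ neg b" "is_rel R (s # a) (s # b)"
    then have "is_rel R (s # v'') (s # u'')" using posneg_inj by metis
    then show ?thesis using H soundness0 by metis
  qed
  then have "req R (v'' @ w) (u'' @ w)" by (rule req_app_right)
  then show ?thesis using h1 h2 by (meson req_sym req_trans)
qed

lemma cancel:
  assumes pp: "positive_presentation R" and rc: "r_complete R"
    and H: "\<forall>s u v. is_rel R (s # u) (s # v) \<longrightarrow> rreverses R (neg u @ pos v) []"
  shows "left_cancellative R"
  unfolding left_cancellative_def
proof (intro allI impI)
  fix x y z assume "req R (x @ y) (x @ z)"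
  then show "req R y z"
  proof (induction x)
    case (Cons s x)
    then show ?case using cancel1[OF pp rc H, of s "x @ y" "x @ z"] by simp
  qed simp
qed

theorem proposition6p1:
  fixes R :: "('a list \<times> 'a list) set"
  assumes "positive_presentation R"
    and "r_complete R"
  shows "(left_cancellative R \<longleftrightarrow>
            (\<forall>s u v. is_rel R (s # u) (s # v) \<longrightarrow> rreverses R (neg u @ pos v) []))
       \<and> ((\<forall>s u v. is_rel R (s # u) (s # v) \<longrightarrow> u = v) \<longrightarrow> left_cancellative R)"
proof (intro conjI iffI impI)
  assume lc: "left_cancellative R"
  show "\<forall>s u v. is_rel R (s # u) (s # v) \<longrightarrow> rreverses R (neg u @ pos v) []"
  proof (intro allI impI)
    fix s u v assume "is_rel R (s # u) (s # v)"
    then have "req R ([s] @ u) ([s] @ v)" unfolding is_rel_def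
      by (auto intro: req_rel req_sym)
    then have "req R u v" using lc unfolding left_cancellative_def by blast
    then have "req R (u @ []) (v @ [])" by simp
    then obtain u'' v'' w where r: "rreverses R (neg u @ pos v) (pos v'' @ neg u'')"
      and h1: "req R [] (u'' @ w)" and h2: "req R [] (v'' @ w)"
      using assms(2) unfolding r_complete_def by blast
    have "u'' = []" "v'' = []" using req_nil_iff[OF assms(1) h1] req_nil_iff[OF assms(1) h2] by auto
    then show "rreverses R (neg u @ pos v) []" using r by (simp add: pos_def neg_def)
  qed
next
  assume "\<forall>s u v. is_rel R (s # u) (s # v) \<longrightarrow> rreverses R (neg u @ pos v) []"
  then show "left_cancellative R" using cancel assms by blast
next
  assume H: "\<forall>s u v. is_rel R (s # u) (s # v) \<longrightarrow> u = v"
  have "\<forall>s u v. is_rel R (s # u) (s # v) \<longrightarrow> rreverses R (neg u @ pos v) []"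
  proof (intro allI impI)
    fix s u v assume "is_rel R (s # u) (s # v)"
    then have "u = v" using H by blast
    show "rreverses R (neg u @ pos v) []"
    proof (cases "u = []")
      case True
      then show ?thesis using \<open>u = v\<close> by (simp add: pos_def neg_def rreverses_def)
    next
      case False
      then have "rev_step R ([] @ neg u @ pos u @ []) ([] @ [])" by (rule rev_step.rev_del)
      then show ?thesis using \<open>u = v\<close> by (simp add: rreverses_def)
    qed
  qed
  then show "left_cancellative R" using cancel assms by blast
qed

end
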